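(* Let $X$ be a compact topological space, let $D\subseteq X$, let $\overline{D}$ be the closure of $D$ in $X$, and put $\partial D:=\overline{D}\setminus D$. Let $\overline{\mathbb{C}}=\mathbb{C}\cup\{\infty\}$ be the Riemann sphere and let $f\colon\overline{D}\to\overline{\mathbb{C}}$ be a continuous map such that $f(D)$ is open in $\overline{\mathbb{C}}$. Suppose $f$ is finite on $\overline{D}$, i.e. $f(\overline{D})\subseteq\mathbb{C}$. Let $E_\infty$ denote the connected component of $\infty$ in $\overline{\mathbb{C}}\setminus f(\partial D)$. Then $f(\overline{D})\subseteq\overline{\mathbb{C}}\setminus E_\infty$.
   Context: Note that $\partial D$ is defined as $\overline{D}\setminus D$. *)

theory Defs
  imports "HOL-Analysis.Analysis"
begin

text \<open>The Riemann sphere \<open>\<complex> \<union> {\<infinity>}\<close>, modelled as \<open>complex option\<close>: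
  \<open>Some z\<close> is the finite point z and \<open>None\<close> is the point at infinity.
  Its topology is the one-point (Alexandroff) compactification of \<open>\<complex>\<close>:
  U is open iff its finite part is open in \<open>\<complex>\<close> and, if U contains \<infinity>,
  U contains all points outside some disc.\<close>

definition riemann_open :: "complex option set \<Rightarrow> bool" where
  "riemann_open U \<longleftrightarrow> open {z. Some z \<in> U} \<and>
     (None \<in> U \<longrightarrow> (\<exists>r. \<forall>z. r < norm z \<longrightarrow> Some z \<in> U))"

lemma istopology_riemann_open: "istopology riemann_open"
  unfolding istopology_def
proof (intro conjI allI impI)
  fix S T assume S: "riemann_open S" and T: "riemann_open T"
  have "{z. Some z \<in> S \<inter> T} = {z. Some z \<in> S} \<inter> {z. Some z \<in> T}" by auto
  hence o: "open {z. Some z \<in> S \<inter> T}" using S T by (simp add: riemann_open_def open_Int)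
  show "riemann_open (S \<inter> T)"
    unfolding riemann_open_def
  proof (intro conjI impI)
    show "open {z. Some z \<in> S \<inter> T}" by (rule o)
    assume "None \<in> S \<inter> T"
    then obtain r1 r2 where "\<forall>z. r1 < norm z \<longrightarrow> Some z \<in> S" "\<forall>z. r2 < norm z \<longrightarrow> Some z \<in> T"
      using S T by (auto simp: riemann_open_def)
    thus "\<exists>r. \<forall>z. r < norm z \<longrightarrow> Some z \<in> S \<inter> T"
      by (intro exI[of _ "max r1 r2"]) auto
  qed
next
  fix K assume K: "\<forall>S\<in>K. riemann_open S"
  have "{z. Some z \<in> \<Union>K} = (\<Union>S\<in>K. {z. Some z \<in> S})" by auto
  hence o: "open {z. Some z \<in> \<Union>K}" using K by (auto simp: riemann_open_def)
  show "riemann_open (\<Union>K)"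
    unfolding riemann_open_def
  proof (intro conjI impI)
    show "open {z. Some z \<in> \<Union>K}" by (rule o)
    assume "None \<in> \<Union>K"
    then obtain S where "S \<in> K" "None \<in> S" by auto
    then obtain r where "\<forall>z. r < norm z \<longrightarrow> Some z \<in> S"
      using K by (auto simp: riemann_open_def)
    thus "\<exists>r. \<forall>z. r < norm z \<longrightarrow> Some z \<in> \<Union>K" using \<open>S \<in> K\<close> by blast
  qed
qed

definition riemann_sphere :: "complex option topology" where
  "riemann_sphere = topology riemann_open"

lemma openin_riemann_sphere: "openin riemann_sphere U \<longleftrightarrow> riemann_open U"
  by (simp add: riemann_sphere_def istopology_riemann_open)

lemma topspace_riemann_sphere: "topspace riemann_sphere = UNIV"
proof -
  have "riemann_open UNIV" by (simp add: riemann_open_def)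
  thus ?thesis by (metis openin_riemann_sphere openin_subset top.extremum_uniqueI)
qed

end

theory Submission
  imports Defs
begin

lemma riemann_Hausdorff: "Hausdorff_space riemann_sphere"
  unfolding Hausdorff_space_def
proof (intro allI impI)
  fix x y :: "complex option" assume "x \<in> topspace riemann_sphere \<and> y \<in> topspace riemann_sphere \<and> x \<noteq> y"
  hence xy: "x \<noteq> y" by blast
  have fin: "\<exists>U V. openin riemann_sphere U \<and> openin riemann_sphere V \<and> Some a \<in> U \<and> None \<in> V \<and> disjnt U V" for a
  proof (intro exI conjI)
    show "openin riemann_sphere (Some ` ball a 1)"
      by (simp add: openin_riemann_sphere riemann_open_def image_iff flip: mem_ball)
    have "open {z::complex. norm a + 1 < norm z}" by (intro open_Collect_less) (auto intro: continuous_intros)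
    moreover have "{z. Some z \<in> insert None (Some ` {z. norm a + 1 < norm z})} = {z::complex. norm a + 1 < norm z}" by auto
    ultimately show "openin riemann_sphere (insert None (Some ` {z. norm a + 1 < norm z}))"
      unfolding openin_riemann_sphere riemann_open_def by (metis (no_types, lifting) imageI insertCI mem_Collect_eq)
    show "disjnt (Some ` ball a 1) (insert None (Some ` {z. norm a + 1 < norm z}))"
      unfolding disjnt_def
    proof (auto simp: dist_norm)
      fix z assume "norm (a - z) < 1" "norm a + 1 < norm z"
      moreover have "norm z \<le> norm a + norm (a - z)" by (metis norm_triangle_sub add.commute norm_minus_commute)
      ultimately show False by linarith
    qed
  qed auto
  show "\<exists>U V. openin riemann_sphere U \<and> openin riemann_sphere V \<and> x \<in> U \<and> y \<in> V \<and> disjnt U V"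
  proof (cases x)
    case None
    then obtain b where b: "y = Some b" using xy by (cases y) auto
    from fin[of b] show ?thesis unfolding None b by (metis disjnt_sym)
  next
    case (Some a)
    show ?thesis
    proof (cases y)
      case None
      from fin[of a] show ?thesis unfolding None Some by blast
    next
      case (Some b)
      with \<open>x = Some a\<close> xy have "a \<noteq> b" by auto
      define r where "r = dist a b / 2"
      have r: "r > 0" using \<open>a \<noteq> b\<close> by (simp add: r_def)
      show ?thesis
      proof (intro exI conjI)
        show "openin riemann_sphere (Some ` ball a r)" "openin riemann_sphere (Some ` ball b r)"
          by (simp_all add: openin_riemann_sphere riemann_open_def image_iff flip: mem_ball)
        show "x \<in> Some ` ball a r" "y \<in> Some ` ball b r" using r \<open>x = Some a\<close> Some by auto
        show "disjnt (Some ` ball a r) (Some ` ball b r)"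
          unfolding disjnt_def
        proof auto
          fix z assume "dist a z < r" "dist b z < r"
          moreover have "dist a b \<le> dist a z + dist b z" by (metis dist_triangle2)
          ultimately show False by (simp add: r_def)
        qed
      qed
    qed
  qed
qed

theorem mainTheorem4:
  fixes X :: "'a topology" and D :: "'a set" and f :: "'a \<Rightarrow> complex option"
  assumes "compact_space X"
    and "D \<subseteq> topspace X"
    and "continuous_map (subtopology X (X closure_of D)) riemann_sphere f"
    and "openin riemann_sphere (f ` D)"
    and "f ` (X closure_of D) \<subseteq> range Some"
  shows "f ` (X closure_of D) \<subseteq>
           topspace riemann_sphere -
           connected_component_of_set
             (subtopology riemann_sphere (topspace riemann_sphere - f ` (X closure_of D - D))) None"
proof -
  define K where "K = X closure_of D"
  define T where "T = topspace riemann_sphere - f ` (K - D)"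
  define E where "E = connected_component_of_set (subtopology riemann_sphere T) None"
  have DK: "D \<subseteq> K" unfolding K_def using assms(2) by (rule closure_of_subset)
  have "compactin X K" unfolding K_def using assms(1) by (simp add: closedin_compact_space)
  hence "compactin (subtopology X K) K" by (simp add: compactin_subtopology)
  hence "compactin riemann_sphere (f ` K)" using assms(3) K_def by (metis image_compactin)
  hence clo: "closedin riemann_sphere (f ` K)" by (simp add: compactin_imp_closedin riemann_Hausdorff)
  have noneK: "None \<notin> f ` K" using assms(5) K_def by auto
  have ET: "E \<subseteq> T" unfolding E_def
    using connected_component_of_subset_topspace[of "subtopology riemann_sphere T" None]
    by (simp add: topspace_subtopology)
  have noneT: "None \<in> T" unfolding T_def topspace_riemann_sphere using noneK DK by auto
  have noneE: "None \<in> E" unfolding E_def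
    using noneT by (simp add: connected_component_of_refl topspace_riemann_sphere)
  have "connectedin (subtopology riemann_sphere T) E" unfolding E_def
    by (rule connectedin_connected_component_of)
  hence "connectedin riemann_sphere E" by (simp add: connectedin_subtopology)
  hence conn: "connected_space (subtopology riemann_sphere E)"
    by (simp add: connectedin_def)
  have eq: "E \<inter> f ` D = E \<inter> f ` K" using ET DK unfolding T_def by auto
  have o: "openin (subtopology riemann_sphere E) (E \<inter> f ` D)"
    using assms(4) by (simp add: openin_subtopology_Int2 Int_commute openin_subtopology) (metis Int_commute)
  have c: "closedin (subtopology riemann_sphere E) (E \<inter> f ` D)"
    unfolding eq using clo by (metis closedin_subtopology Int_commute)
  have "E \<inter> f ` D = {} \<or> E \<inter> f ` D = topspace (subtopology riemann_sphere E)"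
    using conn o c by (simp add: connected_space_clopen_in)
  moreover have "None \<in> topspace (subtopology riemann_sphere E)"
    using noneE by (simp add: topspace_riemann_sphere)
  moreover have "None \<notin> E \<inter> f ` D" using noneK DK by auto
  ultimately have "E \<inter> f ` K = {}" using eq by auto
  thus ?thesis unfolding E_def T_def K_def topspace_riemann_sphere by auto
qed

end
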